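(* Let $M^\star\in\mathbb{R}^{n\times n}$ with $M^\star\succeq0$ and $r^\star=\operatorname{rank}(M^\star)\ge1$, and suppose $X\in\mathbb{R}^{n\times r}$ satisfies $0<\|XX^T-M^\star\|_F\le\rho\,\lambda_{r^\star}(M^\star)$ with $\rho\le1/\sqrt2$. Define the incidence angle $\theta\in[0,\pi/2]$ by \[ \cos\theta=\max_{Y\in\mathbb{R}^{n\times r}}\frac{\langle XX^T-M^\star,XY^T+YX^T\rangle}{\|XX^T-M^\star\|_F\,\|XY^T+YX^T\|_F}. \] Then \[ \sin\theta=\frac{\|(I-XX^\dagger)M^\star(I-XX^\dagger)\|_F}{\|XX^T-M^\star\|_F}\le\frac1{\sqrt2}\frac{\rho}{\sqrt{1-\rho^2}}, \] where $\dagger$ denotes the Moore–Penrose pseudoinverse.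
   Context: Eigenvalues are ordered decreasingly, so $\lambda_{r^\star}(M^\star)$ is the smallest nonzero eigenvalue of $M^\star$. $\langle A,B\rangle=\operatorname{tr}(A^TB)$. The maximum is over $Y$ with $XY^T+YX^T\ne0$. *)

theory Defs
  imports "HOL-Analysis.Analysis"
begin

definition frob_inner :: "real^'c^'r \<Rightarrow> real^'c^'r \<Rightarrow> real" where
  "frob_inner A B = (\<Sum>i\<in>UNIV. \<Sum>j\<in>UNIV. A$i$j * B$i$j)"

definition frob_norm :: "real^'c^'r \<Rightarrow> real" where
  "frob_norm A = sqrt (frob_inner A A)"

definition psd :: "real^'n^'n \<Rightarrow> bool" where
  "psd M \<longleftrightarrow> transpose M = M \<and> (\<forall>x. x \<bullet> (M *v x) \<ge> 0)"

text \<open>Eigenvalues of a square matrix, and the smallest nonzero eigenvalue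
  (for a PSD matrix of rank r this is lambda_r with eigenvalues ordered decreasingly).\<close>
definition eigenvalues :: "real^'n^'n \<Rightarrow> real set" where
  "eigenvalues M = {l. \<exists>v. v \<noteq> 0 \<and> M *v v = l *\<^sub>R v}"

definition min_nonzero_eigenvalue :: "real^'n^'n \<Rightarrow> real" where
  "min_nonzero_eigenvalue M = Min (eigenvalues M - {0})"

definition is_pinv :: "real^'c^'r \<Rightarrow> real^'r^'c \<Rightarrow> bool" where
  "is_pinv A Z \<longleftrightarrow> A ** Z ** A = A \<and> Z ** A ** Z = Z \<and>
     transpose (A ** Z) = A ** Z \<and> transpose (Z ** A) = Z ** A"

definition pinv :: "real^'c^'r \<Rightarrow> real^'r^'c" where
  "pinv A = (THE Z. is_pinv A Z)"

end

theory Submission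
  imports Defs
begin
lemma mm_add_r: "((A::real^'b^'a) + B) ** (C::real^'c^'b) = A ** C + B ** C"
  by (vector matrix_matrix_mult_def sum.distrib distrib_right)
lemma mm_diff_r: "((A::real^'b^'a) - B) ** (C::real^'c^'b) = A ** C - B ** C"
  by (vector matrix_matrix_mult_def sum_subtractf left_diff_distrib)
lemma mm_diff_l: "(A::real^'b^'a) ** ((B::real^'c^'b) - C) = A ** B - A ** C"
  by (vector matrix_matrix_mult_def sum_subtractf right_diff_distrib)
lemma mm_minus_l: "(A::real^'b^'a) ** (- (B::real^'c^'b)) = - (A ** B)"
  by (vector matrix_matrix_mult_def sum_negf)
lemma mm_minus_r: "(- (A::real^'b^'a)) ** ((B::real^'c^'b)) = - (A ** B)"
  by (vector matrix_matrix_mult_def sum_negf)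
lemma tr_add: "transpose ((A::real^'b^'a) + B) = transpose A + transpose B"
  by (vector transpose_def)
lemma tr_diff: "transpose ((A::real^'b^'a) - B) = transpose A - transpose B"
  by (vector transpose_def)
lemma tr_minus: "transpose (- (A::real^'b^'a)) = - transpose A"
  by (vector transpose_def)
lemma tr_zero: "transpose (0::real^'b^'a) = 0"
  by (vector transpose_def)

lemma inner_mm_left: "inner ((A::real^'b^'a) ** (B::real^'c^'b)) C = inner B (transpose A ** C)"
proof -
  have "inner (A ** B) C = (\<Sum>i\<in>UNIV. \<Sum>j\<in>UNIV. \<Sum>k\<in>UNIV. A$i$k * B$k$j * C$i$j)"
    by (simp add: inner_vec_def matrix_matrix_mult_def sum_distrib_right)
  also have "\<dots> = (\<Sum>j\<in>UNIV. \<Sum>i\<in>UNIV. \<Sum>k\<in>UNIV. A$i$k * B$k$j * C$i$j)"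
    by (rule sum.swap)
  also have "\<dots> = (\<Sum>j\<in>UNIV. \<Sum>k\<in>UNIV. \<Sum>i\<in>UNIV. A$i$k * B$k$j * C$i$j)"
    by (rule sum.cong, simp, rule sum.swap)
  also have "\<dots> = (\<Sum>k\<in>UNIV. \<Sum>j\<in>UNIV. \<Sum>i\<in>UNIV. A$i$k * B$k$j * C$i$j)"
    by (rule sum.swap)
  also have "\<dots> = inner B (transpose A ** C)"
    by (simp add: inner_vec_def matrix_matrix_mult_def transpose_def sum_distrib_left mult_ac)
  finally show ?thesis .
qed

lemma frob_inner_eq: "frob_inner A B = inner A B"
  by (simp add: frob_inner_def inner_vec_def)
lemma frob_norm_eq: "frob_norm A = norm A"
  by (simp add: frob_norm_def frob_inner_eq norm_eq_sqrt_inner)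
lemma inner_transpose: "inner (transpose (A::real^'b^'a)) (transpose B) = inner A B"
  by (simp add: inner_vec_def transpose_def) (subst sum.swap, simp)

lemma inner_mm_right: "inner ((A::real^'b^'a) ** (B::real^'c^'b)) C = inner A (C ** transpose B)"
proof -
  have "inner (A ** B) C = inner (transpose (A ** B)) (transpose C)"
    by (simp only: inner_transpose)
  also have "\<dots> = inner (transpose B ** transpose A) (transpose C)"
    by (simp only: matrix_transpose_mul)
  also have "\<dots> = inner (transpose A) (B ** transpose C)"
    by (simp only: inner_mm_left transpose_transpose)
  also have "\<dots> = inner (transpose A) (transpose (C ** transpose B))"
    by (simp only: matrix_transpose_mul transpose_transpose)
  also have "\<dots> = inner A (C ** transpose B)"
    by (simp only: inner_transpose)
  finally show ?thesis .
qed

lemma inner_mv_transpose: "inner x ((A::real^'b^'a) *v y) = inner (transpose A *v x) y"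
  by (simp add: dot_lmul_matrix)

lemma sym_mv: "transpose A = A \<Longrightarrow> inner x ((A::real^'a^'a) *v y) = inner (A *v x) y"
  by (metis inner_mv_transpose)

lemma sym_by_inner:
  assumes "\<And>x y. inner x ((A::real^'a^'a) *v y) = inner (A *v x) y"
  shows "transpose A = A"
proof -
  have "transpose A *v x = A *v x" for x
  proof -
    have "inner (transpose A *v x) y = inner (A *v x) y" for y
      using assms[of x y] inner_mv_transpose[of x A y] by simp
    then show ?thesis using vector_eq_rdot by blast
  qed
  then show ?thesis by (simp add: matrix_eq)
qed

lemma norm_mv: "norm ((A::real^'b^'a) *v x) \<le> norm A * norm x"
proof -
  have "(norm (A *v x))^2 = (\<Sum>i\<in>UNIV. (inner (A$i) x)^2)"
    unfolding power2_norm_eq_inner inner_vec_def[of "A *v x"] matrix_vector_mul_component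
    by (simp add: power2_eq_square)
  also have "\<dots> \<le> (\<Sum>i\<in>UNIV. (norm (A$i))^2 * (norm x)^2)"
  proof (rule sum_mono)
    fix i
    have "\<bar>inner (A$i) x\<bar> \<le> norm (A$i) * norm x" by (rule Cauchy_Schwarz_ineq2)
    then have "\<bar>inner (A$i) x\<bar>^2 \<le> (norm (A$i) * norm x)^2"
      by (rule power_mono) simp
    then show "(inner (A$i) x)^2 \<le> (norm (A$i))^2 * (norm x)^2"
      by (simp add: power_mult_distrib)
  qed
  also have "\<dots> = (norm A * norm x)^2"
    by (simp add: power_mult_distrib sum_distrib_right power2_norm_eq_inner inner_vec_def)
  finally show ?thesis
    by (simp add: power2_le_iff_abs_le)
qed

lemma norm_transpose: "norm (transpose (A::real^'b^'a)) = norm A"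
  by (simp add: norm_eq_sqrt_inner inner_transpose)

lemma norm_mm: "norm ((A::real^'b^'a) ** (B::real^'c^'b)) \<le> norm A * norm B"
proof -
  have row: "(A ** B)$i = transpose B *v (A$i)" for i
    by (simp add: vec_eq_iff matrix_matrix_mult_def matrix_vector_mult_def transpose_def mult_ac)
  have "(norm (A ** B))^2 = (\<Sum>i\<in>UNIV. (norm ((A**B)$i))^2)"
    by (simp add: power2_norm_eq_inner inner_vec_def)
  also have "\<dots> \<le> (\<Sum>i\<in>UNIV. (norm (A$i))^2 * (norm B)^2)"
  proof (rule sum_mono)
    fix i
    have "norm ((A**B)$i) \<le> norm B * norm (A$i)"
      unfolding row using norm_mv[of "transpose B" "A$i"] norm_transpose[of B] by simp
    then have "(norm ((A**B)$i))^2 \<le> (norm B * norm (A$i))^2"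
      by (rule power_mono) simp
    then show "(norm ((A**B)$i))^2 \<le> (norm (A$i))^2 * (norm B)^2"
      by (simp add: power_mult_distrib mult.commute)
  qed
  also have "\<dots> = (norm A * norm B)^2"
    by (simp add: power_mult_distrib sum_distrib_right power2_norm_eq_inner inner_vec_def)
  finally show ?thesis
    by (simp add: power2_le_iff_abs_le)
qed

lemma quad_nonneg_disc:
  fixes a b c :: real
  assumes "\<And>t. 0 \<le> c + 2*t*b + t^2*a" and "0 \<le> a"
  shows "b^2 \<le> a*c"
proof (cases "a = 0")
  case True
  show ?thesis
  proof (cases "b = 0")
    case False
    have "0 \<le> c + 2*(-(c+1)/(2*b))*b + (-(c+1)/(2*b))^2*a" by (rule assms)
    with True False show ?thesis by (simp add: field_simps)
  qed (use True assms(1)[of 0] in simp)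
next
  case False
  then have a0: "a > 0" using assms(2) by simp
  have "0 \<le> c + 2*(-b/a)*b + (-b/a)^2*a" by (rule assms)
  then have "0 \<le> c - b^2/a" using a0 by (simp add: field_simps power2_eq_square)
  then show ?thesis using a0 by (simp add: field_simps)
qed

lemma psd_sym: "psd A \<Longrightarrow> transpose A = A"
  by (simp add: psd_def)
lemma psd_form: "psd A \<Longrightarrow> 0 \<le> x \<bullet> (A *v x)"
  by (simp add: psd_def)

lemma psd_cs:
  assumes "psd A"
  shows "(x \<bullet> (A *v v))^2 \<le> (v \<bullet> (A *v v)) * (x \<bullet> (A *v x))"
proof (rule quad_nonneg_disc)
  fix t :: real
  have s: "v \<bullet> (A *v x) = x \<bullet> (A *v v)"
    using sym_mv[OF psd_sym[OF assms], of v x] by (simp add: inner_commute)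
  have "0 \<le> (x + t *\<^sub>R v) \<bullet> (A *v (x + t *\<^sub>R v))" by (rule psd_form[OF assms])
  also have "\<dots> = x \<bullet> (A *v x) + 2*t*(x \<bullet> (A *v v)) + t^2 * (v \<bullet> (A *v v))"
    by (simp add: algebra_simps inner_add_left inner_add_right s power2_eq_square)
  finally show "0 \<le> x \<bullet> (A *v x) + 2*t*(x \<bullet> (A *v v)) + t^2 * (v \<bullet> (A *v v))" .
qed (rule psd_form[OF assms])

lemma psd_zero_form:
  assumes "psd A" "v \<bullet> (A *v v) = 0" shows "A *v v = 0"
proof -
  have "((A *v v) \<bullet> (A *v v))^2 \<le> 0"
    using psd_cs[OF assms(1), of "A *v v" v] assms(2) by simp
  then show ?thesis by simp
qed

definition outer :: "real^'a \<Rightarrow> real^'b \<Rightarrow> real^'b^'a" where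
  "outer w u = (\<chi> i j. w$i * u$j)"

lemma outer_mv: "outer w u *v x = (u \<bullet> x) *\<^sub>R w"
  by (simp add: outer_def vec_eq_iff matrix_vector_mult_def inner_vec_def sum_distrib_left mult_ac)
lemma outer_inner: "inner (outer w w) (D::real^'a^'a) = w \<bullet> (D *v w)"
  by (simp add: outer_def inner_vec_def matrix_vector_mult_def sum_distrib_left mult_ac)
lemma outer_tr: "transpose (outer w w) = outer w w"
  by (simp add: outer_def transpose_def vec_eq_iff mult.commute)

lemma scaleR_mv: "((c::real) *\<^sub>R (A::real^'b^'a)) *v x = c *\<^sub>R (A *v x)"
  by (simp add: vec_eq_iff matrix_vector_mult_def sum_distrib_left mult_ac)

lemma psd_inner_nonneg_aux:
  fixes D :: "real^'n^'n"
  assumes Dpos: "\<And>x. 0 \<le> x \<bullet> (D *v x)"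
  shows "\<forall>A::real^'n^'n. psd A \<longrightarrow> CARD('n) - dim {x. A *v x = 0} = m \<longrightarrow> 0 \<le> inner A D"
proof (induction m rule: less_induct)
  case (less m)
  show ?case
  proof (intro allI impI)
    fix A :: "real^'n^'n"
    assume A: "psd A" and m: "CARD('n) - dim {x. A *v x = 0} = m"
    show "0 \<le> inner A D"
    proof (cases "A = 0")
      case True then show ?thesis by simp
    next
      case False
      then obtain v where Av: "A *v v \<noteq> 0" by (metis matrix_eq matrix_vector_mult_0)
      define w where "w = A *v v"
      define \<alpha> where "\<alpha> = v \<bullet> w"
      have a0: "\<alpha> > 0"
        using psd_form[OF A, of v] psd_zero_form[OF A, of v] Av unfolding \<alpha>_def w_def by force
      have symA: "\<And>x y. x \<bullet> (A *v y) = (A *v x) \<bullet> y" using sym_mv[OF psd_sym[OF A]] by blast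
      define A' where "A' = A - (1/\<alpha>) *\<^sub>R outer w w"
      have A'mv: "A' *v x = A *v x - ((w \<bullet> x)/\<alpha>) *\<^sub>R w" for x
        by (simp add: A'_def algebra_simps outer_mv scaleR_mv)
      have A'psd: "psd A'"
        unfolding psd_def
      proof (intro conjI allI)
        show "transpose A' = A'"
          by (simp add: A'_def tr_diff transpose_scalar outer_tr psd_sym[OF A])
      next
        fix x
        have cs: "(x \<bullet> w)^2 \<le> \<alpha> * (x \<bullet> (A *v x))"
          using psd_cs[OF A, of x v] unfolding w_def \<alpha>_def by simp
        have "x \<bullet> (A' *v x) = x \<bullet> (A *v x) - (x \<bullet> w)^2/\<alpha>"
          by (simp add: A'mv inner_diff_right power2_eq_square inner_commute)
        also have "\<dots> \<ge> 0" using cs a0 by (simp add: field_simps)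
        finally show "0 \<le> x \<bullet> (A' *v x)" .
      qed
      have sub1: "{x. A *v x = 0} \<subseteq> {x. A' *v x = 0}"
      proof
        fix x assume "x \<in> {x. A *v x = 0}"
        then have "A *v x = 0" by simp
        moreover have "w \<bullet> x = 0" unfolding w_def using symA[of v x] \<open>A *v x = 0\<close>
          by (simp add: inner_commute)
        ultimately show "x \<in> {x. A' *v x = 0}" by (simp add: A'mv)
      qed
      have vker: "A' *v v = 0"
        using a0 by (simp add: A'mv \<alpha>_def inner_commute flip: w_def)
      have sub2: "{x. A *v x = 0} \<subset> {x. A' *v x = 0}"
        using sub1 vker Av by blast
      have subsp: "subspace {x. B *v x = 0}" for B :: "real^'n^'n"
        using real_vector.linear_subspace_kernel[of "\<lambda>x. B *v x"] by simp
      have "dim {x. A *v x = 0} < dim {x. A' *v x = 0}"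
        by (rule dim_psubset) (simp add: span_eq_iff[THEN iffD2, OF subsp] sub2)
      moreover have "dim {x. A' *v x = 0} \<le> CARD('n)"
        using dim_subset_UNIV[of "{x. A' *v x = 0}"] by simp
      ultimately have lt: "CARD('n) - dim {x. A' *v x = 0} < m" using m by linarith
      have IH: "0 \<le> inner A' D" using less[OF lt] A'psd by blast
      have "inner A D = inner A' D + (1/\<alpha>) * (w \<bullet> (D *v w))"
        by (simp add: A'_def inner_diff_left outer_inner)
      also have "\<dots> \<ge> 0" using IH a0 Dpos[of w] by simp
      finally show ?thesis .
    qed
  qed
qed

lemma psd_inner_nonneg:
  fixes D A :: "real^'n^'n"
  assumes "psd A" "\<And>x. 0 \<le> x \<bullet> (D *v x)"
  shows "0 \<le> inner A D"
  using psd_inner_nonneg_aux[OF assms(2)] assms(1) by blast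

lemma pinv_unique:
  assumes 1: "is_pinv A Z1" and 2: "is_pinv A Z2"
  shows "Z1 = Z2"
proof -
  have a1: "A ** Z1 ** A = A" "Z1 ** A ** Z1 = Z1" "transpose (A ** Z1) = A ** Z1" "transpose (Z1 ** A) = Z1 ** A"
    using 1 by (auto simp: is_pinv_def)
  have a2: "A ** Z2 ** A = A" "Z2 ** A ** Z2 = Z2" "transpose (A ** Z2) = A ** Z2" "transpose (Z2 ** A) = Z2 ** A"
    using 2 by (auto simp: is_pinv_def)
  have AZ: "A ** Z1 = A ** Z2"
  proof -
    have "A ** Z1 = (A ** Z2 ** A) ** Z1" using a2 by simp
    also have "\<dots> = (A ** Z2) ** (A ** Z1)" by (simp add: matrix_mul_assoc)
    also have "\<dots> = transpose (A ** Z2) ** transpose (A ** Z1)" using a1 a2 by simp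
    also have "\<dots> = transpose (A ** Z1 ** A ** Z2)" by (simp add: matrix_transpose_mul matrix_mul_assoc)
    also have "\<dots> = transpose (A ** Z2)" using a1 by simp
    also have "\<dots> = A ** Z2" using a2 by simp
    finally show ?thesis .
  qed
  have ZA: "Z1 ** A = Z2 ** A"
  proof -
    have "Z1 ** A = Z1 ** (A ** Z2 ** A)" using a2 by simp
    also have "\<dots> = (Z1 ** A) ** (Z2 ** A)" by (simp add: matrix_mul_assoc)
    also have "\<dots> = transpose (Z1 ** A) ** transpose (Z2 ** A)" using a1 a2 by simp
    also have "\<dots> = transpose (Z2 ** A ** Z1 ** A)" by (simp add: matrix_transpose_mul matrix_mul_assoc)
    also have "\<dots> = transpose (Z2 ** (A ** Z1 ** A))" by (simp add: matrix_mul_assoc)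
    also have "\<dots> = transpose (Z2 ** A)" using a1 by simp
    also have "\<dots> = Z2 ** A" using a2 by simp
    finally show ?thesis .
  qed
  have "Z1 = Z1 ** A ** Z1" using a1 by simp
  also have "\<dots> = Z1 ** (A ** Z2)" by (simp add: AZ flip: matrix_mul_assoc)
  also have "\<dots> = Z2 ** A ** Z2" by (simp add: ZA matrix_mul_assoc)
  also have "\<dots> = Z2" using a2 by simp
  finally show ?thesis .
qed

lemma proj_exists:
  fixes S :: "'a::euclidean_space set"
  assumes "subspace S"
  shows "\<exists>p. linear p \<and> (\<forall>x. p x \<in> S) \<and> (\<forall>x. \<forall>w\<in>S. (x - p x) \<bullet> w = 0)"
proof -
  obtain T where T: "0 \<notin> T" "T \<subseteq> span S" "pairwise orthogonal T" "independent T"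
    "card T = dim (span S)" "span T = span S"
    using orthogonal_basis_subspace subspace_span by blast
  have sp: "span S = S" using assms by (simp add: span_eq_iff)
  define p where "p x = (\<Sum>b\<in>T. (b \<bullet> x / (b \<bullet> b)) *\<^sub>R b)" for x
  have "linear p"
    unfolding p_def
    by (rule linearI) (simp_all add: inner_add_right add_divide_distrib scaleR_add_left sum.distrib
        scaleR_sum_right)
  moreover have "p x \<in> S" for x
    unfolding p_def using T(2) sp by (metis (no_types, lifting) span_mul span_sum subsetD)
  moreover have "(x - p x) \<bullet> w = 0" if "w \<in> S" for x w
    using Gram_Schmidt_step[OF T(3), of w x] that T(6) sp
    by (simp add: p_def orthogonal_def inner_commute)
  ultimately show ?thesis by blast
qed

lemma proj_fix:
  assumes "subspace S" "\<forall>x. p x \<in> S" "\<forall>x. \<forall>w\<in>S. (x - p x) \<bullet> w = 0" "s \<in> S"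
  shows "p s = s"
proof -
  have "s - p s \<in> S" using assms by (simp add: subspace_diff)
  then have "(s - p s) \<bullet> (s - p s) = 0" using assms by blast
  then show ?thesis by simp
qed

lemma proj_sym:
  assumes "\<forall>x. p x \<in> S" "\<forall>x. \<forall>w\<in>S. (x - p x) \<bullet> w = 0"
  shows "x \<bullet> p y = p x \<bullet> p y"
proof -
  have "(x - p x) \<bullet> p y = 0" using assms by blast
  then show ?thesis by (simp add: inner_diff_left)
qed

lemma pinv_exists: "\<exists>Z. is_pinv (X::real^'c^'r) Z"
proof -
  define R where "R = range (\<lambda>y. transpose X *v y)"
  define S where "S = range (\<lambda>x. X *v x)"
  have subR: "subspace R" unfolding R_def
    by (rule real_vector.linear_subspace_image[OF matrix_vector_mul_linear real_vector.subspace_UNIV])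
  have subS: "subspace S" unfolding S_def
    by (rule real_vector.linear_subspace_image[OF matrix_vector_mul_linear real_vector.subspace_UNIV])
  have spR: "span R = R" using subR by (simp add: span_eq_iff)
  obtain pR where pR: "linear pR" "\<forall>x. pR x \<in> R" "\<forall>x. \<forall>w\<in>R. (x - pR x) \<bullet> w = 0"
    using proj_exists[OF subR] by blast
  obtain pS where pS: "linear pS" "\<forall>x. pS x \<in> S" "\<forall>x. \<forall>w\<in>S. (x - pS x) \<bullet> w = 0"
    using proj_exists[OF subS] by blast
  have inj: "inj_on (\<lambda>x. X *v x) (span R)"
  proof (rule inj_onI)
    fix r1 r2 assume r: "r1 \<in> span R" "r2 \<in> span R" "X *v r1 = X *v r2"
    from r(1,2) spR have "r1 \<in> R" "r2 \<in> R" by auto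
    then obtain y1 y2 where y: "r1 = transpose X *v y1" "r2 = transpose X *v y2"
      unfolding R_def by blast
    have "(r1 - r2) \<bullet> (r1 - r2) = (transpose X *v (y1 - y2)) \<bullet> (r1 - r2)"
      by (simp add: y matrix_vector_mult_diff_distrib)
    also have "\<dots> = (y1 - y2) \<bullet> (X *v (r1 - r2))"
      by (simp add: inner_mv_transpose)
    also have "\<dots> = 0" using r(3) by (simp add: matrix_vector_mult_diff_distrib)
    finally show "r1 = r2" by simp
  qed
  obtain g where g: "range g \<subseteq> span R" "linear g" "\<forall>x\<in>span R. g (X *v x) = x"
    using real_vector.linear_inj_on_left_inverse[OF matrix_vector_mul_linear inj] by blast
  define Z where "Z = matrix (g \<circ> pS)"
  have lin: "linear (g \<circ> pS)" using g(2) pS(1) by (simp add: linear_compose)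
  have Zv: "Z *v y = g (pS y)" for y
    unfolding Z_def using matrix_vector_mul(2)[OF lin] by (metis comp_apply)
  have kerX: "X *v (x - pR x) = 0" for x
  proof -
    have "y \<bullet> (X *v (x - pR x)) = 0" for y
      using pR(3) unfolding R_def by (simp add: inner_mv_transpose inner_commute)
    then show ?thesis by (metis inner_eq_zero_iff)
  qed
  have XpR: "X *v pR x = X *v x" for x
    using kerX[of x] by (simp add: matrix_vector_mult_diff_distrib)
  have pSfix: "pS (X *v x) = X *v x" for x
    using proj_fix[OF subS pS(2) pS(3)] unfolding S_def by blast
  have pRfix: "r \<in> R \<Longrightarrow> pR r = r" for r
    using proj_fix[OF subR pR(2) pR(3)] by blast
  have ZX: "Z *v (X *v x) = pR x" for x
  proof -
    have "Z *v (X *v x) = g (X *v pR x)" by (simp add: Zv pSfix XpR)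
    also have "\<dots> = pR x" using g(3) pR(2) spR by simp
    finally show ?thesis .
  qed
  have XZ: "X *v (Z *v y) = pS y" for y
  proof -
    obtain x0 where x0: "pS y = X *v x0" using pS(2) unfolding S_def by blast
    have "Z *v y = pR x0" using ZX[of x0] by (simp add: Zv x0 pSfix)
    then have "X *v (Z *v y) = X *v pR x0" by simp
    also have "\<dots> = pS y" by (simp add: XpR x0)
    finally show ?thesis .
  qed
  have ZR: "Z *v y \<in> R" for y using g(1) spR by (auto simp: Zv)
  have "X ** Z ** X = X"
    by (simp add: matrix_eq flip: matrix_vector_mul_assoc) (simp add: ZX XpR)
  moreover have "Z ** X ** Z = Z"
    by (simp add: matrix_eq flip: matrix_vector_mul_assoc) (simp add: ZX pRfix ZR)
  moreover have "transpose (X ** Z) = X ** Z"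
    apply (rule sym_by_inner)
    apply (simp flip: matrix_vector_mul_assoc add: XZ)
    by (metis proj_sym[OF pS(2) pS(3)] inner_commute)
  moreover have "transpose (Z ** X) = Z ** X"
    apply (rule sym_by_inner)
    apply (simp flip: matrix_vector_mul_assoc add: ZX)
    by (metis proj_sym[OF pR(2) pR(3)] inner_commute)
  ultimately show ?thesis unfolding is_pinv_def by blast
qed

lemma is_pinv_pinv: "is_pinv X (pinv X)"
  unfolding pinv_def
  by (rule theI') (metis pinv_exists pinv_unique)

lemma eig_finite:
  assumes sym: "transpose M = M"
  shows "finite (eigenvalues (M::real^'n^'n))"
proof -
  define E where "E = eigenvalues M"
  define ev where "ev l = (SOME v. v \<noteq> 0 \<and> M *v v = l *\<^sub>R v)" for l
  have ev: "ev l \<noteq> 0 \<and> M *v ev l = l *\<^sub>R ev l" if "l \<in> E" for l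
  proof -
    have "\<exists>v. v \<noteq> 0 \<and> M *v v = l *\<^sub>R v" using that unfolding E_def eigenvalues_def by simp
    then show ?thesis unfolding ev_def by (rule someI_ex)
  qed
  have inj: "inj_on ev E"
  proof (rule inj_onI)
    fix l1 l2 assume l: "l1 \<in> E" "l2 \<in> E" "ev l1 = ev l2"
    then have "l1 *\<^sub>R ev l1 = l2 *\<^sub>R ev l1" using ev[OF l(1)] ev[OF l(2)] by metis
    then show "l1 = l2" using ev[OF l(1)] by simp
  qed
  have po: "pairwise orthogonal (ev ` E)"
    unfolding pairwise_def
  proof (intro ballI impI)
    fix a b assume ab: "a \<in> ev ` E" "b \<in> ev ` E" "a \<noteq> b"
    then obtain l1 l2 where l: "l1 \<in> E" "l2 \<in> E" "a = ev l1" "b = ev l2" by blast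
    have "l1 \<noteq> l2" using ab(3) l(3,4) by auto
    have "l1 * (a \<bullet> b) = (M *v a) \<bullet> b" using ev[OF l(1)] l(3) by simp
    also have "\<dots> = a \<bullet> (M *v b)" using sym_mv[OF sym] by simp
    also have "\<dots> = l2 * (a \<bullet> b)" using ev[OF l(2)] l(4) by simp
    finally have "(l1 - l2) * (a \<bullet> b) = 0" by (simp add: algebra_simps)
    then show "orthogonal a b" using \<open>l1 \<noteq> l2\<close> by (simp add: orthogonal_def)
  qed
  have "0 \<notin> ev ` E" using ev by auto
  then have "independent (ev ` E)" using pairwise_orthogonal_independent po by blast
  then have "finite (ev ` E)" by (rule independent_imp_finite)
  then show ?thesis using inj finite_imageD E_def by blast
qed

lemma eig_bound:
  fixes M :: "real^'n^'n"
  assumes psd: "psd M" and rk: "rank M \<ge> 1"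
  shows "0 < min_nonzero_eigenvalue M \<and>
         (\<exists>u. u \<noteq> 0 \<and> M *v u = min_nonzero_eigenvalue M *\<^sub>R u) \<and>
         (\<forall>x. min_nonzero_eigenvalue M * (x \<bullet> (M *v x)) \<le> (norm (M *v x))^2)"
proof -
  have sym: "transpose M = M" using psd by (simp add: psd_def)
  have symM: "\<And>x y. x \<bullet> (M *v y) = (M *v x) \<bullet> y" using sym_mv[OF sym] by blast
  define q where "q x = x \<bullet> (M *v x)" for x
  define V where "V = range (\<lambda>x. M *v x)"
  have subV: "subspace V" unfolding V_def
    by (rule real_vector.linear_subspace_image[OF matrix_vector_mul_linear real_vector.subspace_UNIV])
  have spV: "span V = V" using span_eq_iff[THEN iffD2, OF subV] .
  have MV: "M *v x \<in> V" for x unfolding V_def by blast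
  have "M \<noteq> 0" using rk by (metis rank_0 not_one_le_zero)
  then obtain x0 where x0: "M *v x0 \<noteq> 0" by (metis matrix_eq matrix_vector_mult_0)
  define K where "K = V \<inter> sphere 0 1"
  have cK: "compact K" unfolding K_def
    by (rule closed_Int_compact[OF closed_subspace[OF subV] compact_sphere])
  have "(1/norm (M *v x0)) *\<^sub>R (M *v x0) \<in> K"
    unfolding K_def using x0 MV subspace_scale[OF subV MV] by simp
  then have neK: "K \<noteq> {}" by blast
  have cq: "continuous_on K q"
    unfolding q_def by (intro continuous_intros matrix_vector_mult_linear_continuous_on)
  obtain v where v: "v \<in> K" "\<forall>y\<in>K. q v \<le> q y"
    using continuous_attains_inf[OF cK neK cq] by blast
  define \<mu> where "\<mu> = q v"
  have vV: "v \<in> V" and nv: "norm v = 1" using v(1) unfolding K_def by auto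
  have vv: "v \<bullet> v = 1" using nv by (metis norm_eq_sqrt_inner real_sqrt_eq_1_iff)
  have qV: "\<mu> * (norm u)^2 \<le> q u" if "u \<in> V" for u
  proof (cases "u = 0")
    case True then show ?thesis by (simp add: q_def)
  next
    case False
    have "(1/norm u) *\<^sub>R u \<in> K" unfolding K_def using False subspace_scale[OF subV that] by simp
    then have "\<mu> \<le> q ((1/norm u) *\<^sub>R u)" using v(2) \<mu>_def by blast
    also have "\<dots> = q u / (norm u)^2"
      by (simp add: q_def matrix_vector_mult_scaleR power2_eq_square)
    finally show ?thesis using False by (simp add: field_simps)
  qed
  define w where "w = M *v v - \<mu> *\<^sub>R v"
  have wV: "w \<in> V" unfolding w_def using MV vV subV by (simp add: subspace_diff subspace_scale)
  have Kw: "0 \<le> q w - \<mu> * (w \<bullet> w)" using qV[OF wV] by (simp add: power2_norm_eq_inner)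
  have "(w \<bullet> w)^2 \<le> (q w - \<mu> * (w \<bullet> w)) * 0"
  proof (rule quad_nonneg_disc[OF _ Kw])
    fix t :: real
    have "v + t *\<^sub>R w \<in> V" using vV wV subV by (simp add: subspace_add subspace_scale)
    then have h: "\<mu> * (norm (v + t *\<^sub>R w))^2 \<le> q (v + t *\<^sub>R w)" by (rule qV)
    have e1: "(norm (v + t *\<^sub>R w))^2 = 1 + 2*t*(v \<bullet> w) + t^2 * (w \<bullet> w)"
      using vv unfolding power2_norm_eq_inner by (simp add: inner_add_left inner_add_right inner_commute
          algebra_simps power2_eq_square)
    have e2: "q (v + t *\<^sub>R w) = \<mu> + 2*t*(w \<bullet> (M *v v)) + t^2 * q w"
      using symM[of v w] by (simp add: q_def \<mu>_def algebra_simps inner_add_left inner_add_right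
          inner_commute power2_eq_square matrix_vector_mult_scaleR)
    have e3: "w \<bullet> (M *v v) - \<mu> * (v \<bullet> w) = w \<bullet> w"
      by (simp add: w_def inner_diff_right inner_commute algebra_simps)
    show "0 \<le> 0 + 2*t*(w \<bullet> w) + t^2 * (q w - \<mu> * (w \<bullet> w))"
      using h unfolding e1 e2 e3[symmetric] by (simp add: algebra_simps)
  qed
  then have "w = 0" by simp
  then have Mv: "M *v v = \<mu> *\<^sub>R v" unfolding w_def by simp
  have mu0: "\<mu> \<noteq> 0"
  proof
    assume "\<mu> = 0"
    then have Mv0: "M *v v = 0" using Mv by simp
    obtain y where y: "v = M *v y" using vV unfolding V_def by blast
    have "v \<bullet> v = y \<bullet> (M *v v)" using symM[of y v] y by (simp add: inner_commute)
    then show False using Mv0 nv by simp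
  qed
  have v0: "v \<noteq> 0" using nv by auto
  have mu_in: "\<mu> \<in> eigenvalues M - {0}"
    unfolding eigenvalues_def using Mv v0 mu0 by blast
  have fin: "finite (eigenvalues M - {0})" using eig_finite[OF sym] by simp
  define lam where "lam = min_nonzero_eigenvalue M"
  have lam_le: "lam \<le> \<mu>" unfolding lam_def min_nonzero_eigenvalue_def
    using Min_le[OF fin mu_in] .
  have lam_in: "lam \<in> eigenvalues M - {0}" unfolding lam_def min_nonzero_eigenvalue_def
    using Min_in[OF fin] mu_in by blast
  have lam_pos: "lam > 0"
  proof -
    obtain u where u: "u \<noteq> 0" "M *v u = lam *\<^sub>R u" using lam_in unfolding eigenvalues_def by blast
    have "0 \<le> u \<bullet> (M *v u)" using psd_form[OF psd] .
    then have "0 \<le> lam * (u \<bullet> u)" using u by simp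
    moreover have "u \<bullet> u > 0" using u by simp
    ultimately have "0 \<le> lam" by (simp add: zero_le_mult_iff)
    then show ?thesis using lam_in by auto
  qed
  have F: "lam * (x \<bullet> (M *v x)) \<le> (norm (M *v x))^2" for x
  proof -
    obtain y z where yz: "y \<in> span V" "\<And>w. w \<in> span V \<Longrightarrow> orthogonal z w" "x = y + z"
      using orthogonal_subspace_decomp_exists by blast
    have yV: "y \<in> V" using yz(1) spV by simp
    have Mz: "M *v z = 0"
    proof -
      have "u \<bullet> (M *v z) = 0" for u
        using yz(2)[of "M *v u"] MV[of u] spV symM[of u z]
        by (simp add: orthogonal_def inner_commute)
      then show ?thesis by (metis inner_eq_zero_iff)
    qed
    have Mx: "M *v x = M *v y" using yz(3) Mz by (simp add: matrix_vector_right_distrib)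
    have zMy: "z \<bullet> (M *v y) = 0" using yz(2)[of "M *v y"] MV[of y] spV
      by (simp add: orthogonal_def)
    have qx: "x \<bullet> (M *v x) = q y" using Mx zMy yz(3) by (simp add: q_def inner_add_left)
    have qy0: "0 \<le> q y" unfolding q_def by (rule psd_form[OF psd])
    have c1: "\<mu> * (norm y)^2 \<le> q y" by (rule qV[OF yV])
    have c2: "q y \<le> norm y * norm (M *v y)" unfolding q_def by (rule Cauchy_Schwarz_ineq2[THEN order_trans[OF abs_ge_self]])
    have mu_pos: "\<mu> > 0" using lam_pos lam_le by simp
    have c3: "\<mu> * norm y \<le> norm (M *v y)"
    proof (cases "y = 0")
      case False
      then have "norm y > 0" by simp
      from c1 c2 have "(\<mu> * norm y) * norm y \<le> norm (M *v y) * norm y"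
        by (simp add: power2_eq_square mult_ac)
      then show ?thesis using \<open>norm y > 0\<close> mult_le_cancel_right_pos by blast
    qed simp
    have "lam * q y \<le> \<mu> * q y" using lam_le qy0 by (simp add: mult_right_mono)
    also have "\<dots> \<le> \<mu> * (norm y * norm (M *v y))" using c2 mu_pos by simp
    also have "\<dots> = (\<mu> * norm y) * norm (M *v y)" by simp
    also have "\<dots> \<le> norm (M *v y) * norm (M *v y)" using c3 by (simp add: mult_right_mono)
    finally show ?thesis using qx Mx by (simp add: power2_eq_square)
  qed
  have "\<exists>u. u \<noteq> 0 \<and> M *v u = lam *\<^sub>R u" using lam_in unfolding eigenvalues_def by blast
  then show ?thesis using lam_pos F unfolding lam_def by blast
qed

lemma t1: fixes D lam rho :: real assumes "0 < D" "0 < lam" "D \<le> rho * lam" shows "0 < rho"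
proof (rule ccontr)
  assume "\<not> 0 < rho" then have "rho * lam \<le> 0" using assms(2) by (simp add: mult_nonpos_nonneg)
  then show False using assms by linarith
qed

lemma t2: fixes c b lam :: real assumes "0 < c" "lam * c^2 \<le> c * b^2 + c^3" shows "lam * c \<le> b^2 + c^2"
proof -
  have "c * (lam * c) \<le> c * (b^2 + c^2)" using assms(2) by (simp add: power2_eq_square power3_eq_cube algebra_simps)
  then show ?thesis using assms(1) by simp
qed

lemma t3: fixes rho s t :: real assumes "0 < rho" "s^2 = 1 - rho^2"
  shows "rho * t^2 - 2*t + rho = rho * (t - (1-s)/rho) * (t - (1+s)/rho)"
proof -
  have "rho * (t - (1-s)/rho) * (t - (1+s)/rho) = (rho*t - (1-s)) * (rho * t - (1+s)) / rho"
    using assms(1) by (simp add: field_simps)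
  also have "\<dots> = (rho^2*t^2 - 2*rho*t + (1 - s^2)) / rho"
    by (simp add: algebra_simps power2_eq_square)
  also have "\<dots> = (rho^2*t^2 - 2*rho*t + rho^2) / rho" using assms(2) by simp
  also have "\<dots> = rho * t^2 - 2*t + rho" using assms(1) by (simp add: power2_eq_square field_simps)
  finally show ?thesis by simp
qed

lemma t4: fixes rho c D :: real assumes "0 < D"
  shows "rho * (c/D)^2 - 2*(c/D) + rho = (rho * (D^2 + c^2) - 2 * D * c) / D^2"
  using assms by (simp add: power2_eq_square field_simps)

lemma t5: fixes x rho a :: real assumes "0 < rho" "0 < a" "x * a \<le> rho * rho"
  shows "x / rho \<le> rho / a"
proof -
  have "x \<le> rho * rho / a" using assms by (simp add: le_divide_eq)
  then show ?thesis using assms(1) by (simp add: divide_le_eq mult.commute)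
qed

lemma final_arith:
  fixes c b D lam rho :: real
  assumes D: "0 < D" and c: "0 \<le> c" and lam: "0 < lam" and cl: "D \<le> rho * lam"
    and rho: "rho \<le> 1 / sqrt 2" and DD: "2*b^2 + c^2 \<le> D^2"
    and key: "lam * c^2 \<le> c * b^2 + c^3"
  shows "c / D \<le> 1 / sqrt 2 * (rho / sqrt (1 - rho^2))"
proof -
  have r2: "sqrt 2 * sqrt 2 = 2" by simp
  have r2gt: "1 < sqrt 2" by simp
  have rpos: "0 < rho" using t1[OF D lam cl] .
  have "1 / sqrt 2 < 1" using r2gt by simp
  then have rho1: "rho < 1" using rho by linarith
  have rsq: "rho^2 \<le> 1/2"
  proof -
    have "rho^2 \<le> (1/sqrt 2)^2" using rho rpos by (intro power_mono) auto
    also have "\<dots> = 1/2" by (simp add: power_divide)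
    finally show ?thesis .
  qed
  define s where "s = sqrt (1 - rho^2)"
  have s_pos: "0 < s" unfolding s_def using rsq by simp
  have s2: "s^2 = 1 - rho^2" unfolding s_def using rsq by simp
  have s1: "s \<le> 1" unfolding s_def using rpos by simp
  have rhs: "1 / sqrt 2 * (rho / sqrt (1 - rho^2)) = rho / (sqrt 2 * s)"
    unfolding s_def by simp
  show ?thesis
  proof (cases "c = 0")
    case True
    have "0 \<le> rho / (sqrt 2 * s)" using rpos s_pos by simp
    then show ?thesis using True by (simp only: rhs)
  next
    case False
    then have cpos: "0 < c" using c by simp
    have k1: "lam * c \<le> b^2 + c^2" using t2[OF cpos key] .
    have cD2: "c^2 \<le> D^2" using DD zero_le_power2[of b] by linarith
    have cD: "c \<le> D" using power2_le_imp_le[OF cD2] D by simp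
    define t where "t = c / D"
    have t0: "0 < t" "t \<le> 1" unfolding t_def using cpos D cD by auto
    have h1: "2 * lam * c \<le> D^2 + c^2" using k1 DD by linarith
    have "D \<le> rho * lam" by (rule cl)
    then have "2 * D * c \<le> rho * (2 * lam * c)" using cpos by (simp add: mult_right_mono algebra_simps)
    also have "\<dots> \<le> rho * (D^2 + c^2)" using h1 rpos by (simp add: mult_left_mono)
    finally have h2: "2 * D * c \<le> rho * (D^2 + c^2)" .
    have "rho * t^2 - 2*t + rho = (rho * (D^2 + c^2) - 2 * D * c) / D^2"
      unfolding t_def by (rule t4[OF D])
    also have "\<dots> \<ge> 0" using h2 by simp
    finally have q: "0 \<le> rho * t^2 - 2*t + rho" .
    have fac: "rho * t^2 - 2*t + rho = rho * (t - (1-s)/rho) * (t - (1+s)/rho)"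
      by (rule t3[OF rpos s2])
    have "rho < 1 + s" using rho1 s_pos by linarith
    then have "1 < (1+s)/rho" using rpos by (simp add: less_divide_eq)
    then have neg: "t - (1+s)/rho < 0" using t0 by simp
    have "t - (1-s)/rho \<le> 0"
    proof (rule ccontr)
      assume "\<not> t - (1-s)/rho \<le> 0"
      then have "0 < rho * (t - (1-s)/rho)" using rpos by simp
      then have "rho * (t - (1-s)/rho) * (t - (1+s)/rho) < 0" using neg by (simp add: mult_pos_neg)
      then show False using q fac by linarith
    qed
    then have tt: "t \<le> (1-s)/rho" by simp
    have "(1-s) * (sqrt 2 * s) \<le> (1-s)*(1+s)"
    proof (rule mult_left_mono)
      have "sqrt 2 * s - s = (sqrt 2 - 1) * s" by (simp add: algebra_simps)
      also have "\<dots> \<le> (sqrt 2 - 1) * 1" using s1 r2gt by (intro mult_left_mono) auto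
      also have "\<dots> \<le> 1" using r2 r2gt sqrt2_less_2 by simp
      finally show "sqrt 2 * s \<le> 1 + s" by simp
    qed (use s1 in simp)
    also have "\<dots> = rho * rho" using s2 by (simp add: algebra_simps power2_eq_square)
    finally have "(1-s) * (sqrt 2 * s) \<le> rho * rho" .
    moreover have "0 < sqrt 2 * s" using s_pos by simp
    ultimately have "(1-s)/rho \<le> rho / (sqrt 2 * s)" using t5[OF rpos] by blast
    with tt have "t \<le> rho / (sqrt 2 * s)" by simp
    then show ?thesis unfolding t_def by (simp only: rhs)
  qed
qed

lemma grp4: "(a::'a::ab_group_add) - x + (b - x) = a + b - (x + x)"
  by (simp add: algebra_simps)

theorem lemma19:
  fixes Mstar :: "real^'n^'n" and X :: "real^'r^'n" and \<rho> \<theta> :: real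
  assumes psd: "psd Mstar"
    and rank_pos: "rank Mstar \<ge> 1"
    and pos: "0 < frob_norm (X ** transpose X - Mstar)"
    and close: "frob_norm (X ** transpose X - Mstar) \<le> \<rho> * min_nonzero_eigenvalue Mstar"
    and rho: "\<rho> \<le> 1 / sqrt 2"
    and theta_range: "0 \<le> \<theta>" "\<theta> \<le> pi / 2"
    and theta_def: "cos \<theta> = Sup ((\<lambda>Y. frob_inner (X ** transpose X - Mstar) (X ** transpose Y + Y ** transpose X)
                     / (frob_norm (X ** transpose X - Mstar) * frob_norm (X ** transpose Y + Y ** transpose X)))
                   ` {Y :: real^'r^'n. X ** transpose Y + Y ** transpose X \<noteq> 0})"
  shows "sin \<theta> = frob_norm ((mat 1 - X ** pinv X) ** Mstar ** (mat 1 - X ** pinv X))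
                  / frob_norm (X ** transpose X - Mstar)
       \<and> sin \<theta> \<le> 1 / sqrt 2 * (\<rho> / sqrt (1 - \<rho>^2))"
proof -
  define M where "M = Mstar"
  define E where "E = X ** transpose X - M"
  define Z where "Z = pinv X"
  define P where "P = X ** Z"
  define Q where "Q = mat 1 - P"
  define lam where "lam = min_nonzero_eigenvalue M"
  define D where "D = norm E"
  have pv: "X ** Z ** X = X" "Z ** X ** Z = Z" "transpose (X ** Z) = X ** Z"
    using is_pinv_pinv[of X] unfolding is_pinv_def Z_def by auto
  have Pt: "transpose P = P" using pv P_def by simp
  have PX: "P ** X = X" using pv P_def by simp
  have PP: "P ** P = P" unfolding P_def using pv by (metis matrix_mul_assoc)
  have PP2: "A ** P ** P = A ** P" for A :: "real^'n^'k"
    by (metis PP matrix_mul_assoc)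
  have QX: "Q ** X = 0" unfolding Q_def by (simp add: mm_diff_r PX)
  have Qt: "transpose Q = Q" unfolding Q_def by (simp add: tr_diff Pt)
  have PQ: "P ** Q = 0" unfolding Q_def by (simp add: mm_diff_l PP)
  have QP: "Q ** P = 0" unfolding Q_def by (simp add: mm_diff_r PP)
  have QQ: "Q ** Q = Q" unfolding Q_def by (simp add: mm_diff_r mm_diff_l PP)
  have XtQ: "transpose X ** Q = 0"
    by (metis QX Qt matrix_transpose_mul tr_zero)
  have Mt: "transpose M = M" using psd unfolding M_def psd_def by simp
  have Et: "transpose E = E" unfolding E_def by (simp add: tr_diff Mt matrix_transpose_mul)
  have D0: "0 < D" using pos unfolding D_def E_def M_def frob_norm_eq .
  have eb: "0 < lam \<and> (\<exists>u. u \<noteq> 0 \<and> M *v u = lam *\<^sub>R u) \<and> (\<forall>x. lam * (x \<bullet> (M *v x)) \<le> (norm (M *v x))^2)"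
    unfolding lam_def M_def by (rule eig_bound[OF psd rank_pos])
  then have lam0: "0 < lam" and eigu: "\<exists>u. u \<noteq> 0 \<and> M *v u = lam *\<^sub>R u" and F: "\<And>x. lam * (x \<bullet> (M *v x)) \<le> (norm (M *v x))^2" by auto
  define SY where "SY Y = X ** transpose Y + Y ** transpose X" for Y
  have QSQ: "Q ** SY Y ** Q = 0" for Y
  proof -
    have 1: "Q ** (X ** transpose Y) ** Q = 0" by (simp add: matrix_mul_assoc QX)
    have 2: "Q ** (Y ** transpose X) ** Q = 0" by (metis XtQ matrix_mul_assoc times0_right)
    show ?thesis unfolding SY_def by (simp add: matrix_add_ldistrib mm_add_r 1 2)
  qed
  have orth1: "inner (Q ** E ** Q) (SY Y) = 0" for Y
  proof -
    have "inner (Q ** E ** Q) (SY Y) = inner (Q ** E) (SY Y ** transpose Q)" by (rule inner_mm_right)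
    also have "\<dots> = inner E (transpose Q ** (SY Y ** transpose Q))" by (rule inner_mm_left)
    also have "\<dots> = inner E (Q ** SY Y ** Q)" by (simp add: Qt matrix_mul_assoc)
    also have "\<dots> = 0" by (simp add: QSQ)
    finally show ?thesis .
  qed
  define W where "W = P ** E ** P"
  define S0 where "S0 = E - Q ** E ** Q"
  define A0 where "A0 = P ** E - (1/2) *\<^sub>R W"
  define Y0 where "Y0 = transpose (Z ** A0)"
  have PW: "P ** W = W" unfolding W_def by (simp add: matrix_mul_assoc PP)
  have PA0: "P ** A0 = A0" unfolding A0_def
    by (simp add: mm_diff_l matrix_scalar_ac PW matrix_mul_assoc PP flip: scalar_matrix_assoc)
  have Wt: "transpose W = W" unfolding W_def by (simp add: matrix_transpose_mul Pt Et matrix_mul_assoc)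
  have tA0: "transpose A0 = E ** P - (1/2) *\<^sub>R W"
    unfolding A0_def by (simp add: tr_diff transpose_scalar Wt matrix_transpose_mul Pt Et)
  have S0e: "S0 = P ** E + E ** P - W"
    unfolding S0_def Q_def W_def by (simp add: mm_diff_l mm_diff_r matrix_mul_assoc algebra_simps)
  have half: "(1/2) *\<^sub>R W + (1/2) *\<^sub>R W = W" by (simp flip: scaleR_add_left)
  have XY0: "X ** transpose Y0 = A0"
    unfolding Y0_def by (simp add: matrix_mul_assoc flip: P_def) (rule PA0)
  have Y0X: "Y0 ** transpose X = transpose A0"
  proof -
    have 1: "X ** (Z ** A0) = A0" using XY0 unfolding Y0_def by simp
    have "Y0 ** transpose X = transpose (X ** (Z ** A0))"
      unfolding Y0_def by (simp only: matrix_transpose_mul)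
    then show ?thesis unfolding 1 .
  qed
  have SY0: "SY Y0 = S0"
  proof -
    have "SY Y0 = A0 + transpose A0" unfolding SY_def XY0 Y0X ..
    also have "\<dots> = P ** E + E ** P - ((1/2) *\<^sub>R W + (1/2) *\<^sub>R W)"
      unfolding tA0 unfolding A0_def by (rule grp4)
    also have "\<dots> = S0" unfolding half S0e ..
    finally show ?thesis .
  qed
  have innerE: "inner E (SY Y) = inner S0 (SY Y)" for Y
  proof -
    have "inner E (SY Y) = inner S0 (SY Y) + inner (Q ** E ** Q) (SY Y)"
      by (simp add: S0_def inner_diff_left)
    then show ?thesis using orth1[of Y] by simp
  qed
  have rho1: "\<rho> < 1"
  proof -
    have "1 / sqrt 2 < 1" by simp
    then show ?thesis using rho by linarith
  qed
  have Xn0: "X \<noteq> 0"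
  proof
    assume X0: "X = 0"
    then have "E = - M" unfolding E_def by simp
    then have DM: "D = norm M" unfolding D_def by simp
    obtain u where u: "u \<noteq> 0" "M *v u = lam *\<^sub>R u" using eigu by blast
    have "lam * norm u \<le> norm M * norm u" using norm_mv[of M u] u lam0 by simp
    then have "lam \<le> norm M" using u by simp
    moreover have "D \<le> \<rho> * lam" using close unfolding D_def E_def M_def lam_def frob_norm_eq .
    moreover have "\<rho> * lam < lam" using rho1 lam0 by simp
    ultimately show False using DM by linarith
  qed
  have XX: "X ** transpose X \<noteq> 0"
  proof
    assume XX0: "X ** transpose X = 0"
    have "transpose X *v v = 0" for v
    proof -
      have "(transpose X *v v) \<bullet> (transpose X *v v) = v \<bullet> (X *v (transpose X *v v))"
        by (simp add: inner_mv_transpose)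
      also have "\<dots> = v \<bullet> ((X ** transpose X) *v v)" by (simp only: matrix_vector_mul_assoc)
      also have "\<dots> = 0" using XX0 by simp
      finally show ?thesis by simp
    qed
    then have "transpose X = 0" by (simp add: matrix_eq)
    then have "X = 0" by (metis transpose_transpose tr_zero)
    then show False using Xn0 by simp
  qed
  have SYX: "SY X \<noteq> 0"
  proof
    assume "SY X = 0"
    then have "2 *\<^sub>R (X ** transpose X) = 0" unfolding SY_def by (simp add: scaleR_2)
    then show False using XX by simp
  qed
  define f where "f Y = inner E (SY Y) / (D * norm (SY Y))" for Y
  have cos_eq: "cos \<theta> = Sup (f ` {Y. SY Y \<noteq> 0})"
    unfolding f_def SY_def D_def E_def M_def using theta_def by (simp only: frob_inner_eq frob_norm_eq)
  have fle: "f Y \<le> norm S0 / D" if "SY Y \<noteq> 0" for Y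
  proof -
    have n0: "0 < norm (SY Y)" using that by simp
    have "inner E (SY Y) \<le> norm S0 * norm (SY Y)" unfolding innerE by (rule norm_cauchy_schwarz)
    then have "f Y \<le> norm S0 * norm (SY Y) / (D * norm (SY Y))"
      unfolding f_def using D0 n0 by (intro divide_right_mono) auto
    also have "\<dots> = norm S0 / D" using n0 by simp
    finally show ?thesis .
  qed
  have fwit: "\<exists>Y. SY Y \<noteq> 0 \<and> f Y = norm S0 / D"
  proof (cases "S0 = 0")
    case True
    then show ?thesis using SYX by (intro exI[of _ X]) (simp add: f_def innerE)
  next
    case False
    have "f Y0 = inner S0 (SY Y0) / (D * norm (SY Y0))" by (simp only: f_def innerE)
    also have "\<dots> = (norm S0)^2 / (D * norm S0)" unfolding SY0 by (simp only: power2_norm_eq_inner)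
    also have "\<dots> = norm S0 / D" using False by (simp add: power2_eq_square)
    finally have "f Y0 = norm S0 / D" .
    then show ?thesis using False SY0 by (intro exI[of _ Y0]) simp
  qed
  have cosv: "cos \<theta> = norm S0 / D"
    unfolding cos_eq
  proof (rule cSup_eq_maximum)
    show "norm S0 / D \<in> f ` {Y. SY Y \<noteq> 0}" using fwit by force
  next
    fix x assume "x \<in> f ` {Y. SY Y \<noteq> 0}"
    then show "x \<le> norm S0 / D" using fle by blast
  qed
  have QEQ: "Q ** E ** Q = - (Q ** M ** Q)"
    unfolding E_def by (simp add: mm_diff_l mm_diff_r matrix_mul_assoc QX mm_minus_r)
  define C where "C = Q ** M ** Q"
  define c where "c = norm C"
  have Eeq: "E = S0 + Q ** E ** Q" by (simp add: S0_def)
  have orthS: "orthogonal S0 (Q ** E ** Q)"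
    using orth1[of Y0] unfolding SY0 orthogonal_def by (simp add: inner_commute)
  have pyth: "D^2 = (norm S0)^2 + c^2"
  proof -
    have "D^2 = (norm (S0 + Q ** E ** Q))^2" unfolding D_def using Eeq by metis
    also have "\<dots> = (norm S0)^2 + (norm (Q ** E ** Q))^2" by (rule norm_add_Pythagorean[OF orthS])
    finally show ?thesis unfolding QEQ c_def C_def by simp
  qed
  have sin0: "0 \<le> sin \<theta>" using theta_range by (intro sin_ge_zero) auto
  have "(sin \<theta>)^2 = 1 - (cos \<theta>)^2" using sin_cos_squared_add[of \<theta>] by linarith
  also have "\<dots> = (D^2 - (norm S0)^2) / D^2" unfolding cosv using D0
    by (simp add: power_divide diff_divide_distrib)
  also have "\<dots> = (c / D)^2" using pyth by (simp add: power_divide)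
  finally have "(sin \<theta>)^2 = (c / D)^2" .
  then have sinv: "sin \<theta> = c / D"
    using sin0 D0 by (subst (asm) power2_eq_iff_nonneg) (auto simp: c_def)
  have goal1: "sin \<theta> = frob_norm ((mat 1 - X ** pinv X) ** Mstar ** (mat 1 - X ** pinv X))
                  / frob_norm (X ** transpose X - Mstar)"
    unfolding frob_norm_eq sinv c_def C_def D_def E_def Q_def P_def Z_def M_def ..
  define B where "B = P ** M ** Q"
  define b where "b = norm B"
  have XXtQ: "X ** transpose X ** Q = 0"
  proof -
    have "X ** transpose X ** Q = X ** (transpose X ** Q)" by (simp only: matrix_mul_assoc)
    then show ?thesis by (simp add: XtQ)
  qed
  have PEQ: "P ** E ** Q = - B"
  proof -
    have "P ** (X ** transpose X) ** Q = X ** transpose X ** Q" by (simp add: matrix_mul_assoc PX)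
    then have 1: "P ** (X ** transpose X) ** Q = 0" using XXtQ by simp
    show ?thesis unfolding E_def B_def by (simp add: mm_diff_l mm_diff_r 1 mm_minus_r)
  qed
  have tPEQ: "transpose (P ** E ** Q) = Q ** E ** P"
    by (simp add: matrix_transpose_mul Pt Qt Et matrix_mul_assoc)
  have S0d: "S0 = P ** E ** P + P ** E ** Q + Q ** E ** P"
    unfolding S0e W_def Q_def by (simp add: mm_diff_l mm_diff_r matrix_mul_assoc algebra_simps)
  have o1: "inner (P ** E ** P) (P ** E ** Q) = 0"
  proof -
    have "inner (P ** E ** P) (P ** E ** Q) = inner (P ** E) (P ** E ** Q ** transpose P)"
      by (rule inner_mm_right)
    also have "\<dots> = inner (P ** E) (P ** E ** (Q ** P))" by (simp only: Pt matrix_mul_assoc)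
    finally show ?thesis by (simp add: QP)
  qed
  have o2: "inner (P ** E ** P) (Q ** E ** P) = 0"
  proof -
    have "inner (P ** E ** P) (Q ** E ** P) = inner (P ** (E ** P)) (Q ** (E ** P))"
      by (simp only: matrix_mul_assoc)
    also have "\<dots> = inner (E ** P) (transpose P ** (Q ** (E ** P)))" by (rule inner_mm_left)
    also have "\<dots> = inner (E ** P) ((P ** Q) ** (E ** P))" by (simp only: Pt matrix_mul_assoc)
    finally show ?thesis by (simp add: PQ)
  qed
  have o3: "inner (P ** E ** Q) (Q ** E ** P) = 0"
  proof -
    have "inner (P ** E ** Q) (Q ** E ** P) = inner (P ** (E ** Q)) (Q ** (E ** P))"
      by (simp only: matrix_mul_assoc)
    also have "\<dots> = inner (E ** Q) (transpose P ** (Q ** (E ** P)))" by (rule inner_mm_left)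
    also have "\<dots> = inner (E ** Q) ((P ** Q) ** (E ** P))" by (simp only: Pt matrix_mul_assoc)
    finally show ?thesis by (simp add: PQ)
  qed
  have nS0: "2 * b^2 \<le> (norm S0)^2"
  proof -
    have "(norm S0)^2 = (norm (P ** E ** P + P ** E ** Q))^2 + (norm (Q ** E ** P))^2"
      unfolding S0d using o2 o3 by (intro norm_add_Pythagorean) (simp add: orthogonal_def inner_add_left)
    also have "(norm (P ** E ** P + P ** E ** Q))^2 = (norm (P ** E ** P))^2 + (norm (P ** E ** Q))^2"
      using o1 by (intro norm_add_Pythagorean) (simp add: orthogonal_def)
    finally have "(norm S0)^2 = (norm (P ** E ** P))^2 + (norm (P ** E ** Q))^2 + (norm (Q ** E ** P))^2" .
    moreover have "norm (P ** E ** Q) = b" unfolding PEQ b_def by simp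
    moreover have "norm (Q ** E ** P) = b" unfolding tPEQ[symmetric] norm_transpose PEQ b_def by simp
    ultimately show ?thesis by simp
  qed
  have DD: "2 * b^2 + c^2 \<le> D^2" using nS0 pyth by linarith
  have Ct: "transpose C = C" unfolding C_def by (simp add: matrix_transpose_mul Qt Mt matrix_mul_assoc)
  have Cpsd: "psd C"
    unfolding psd_def
  proof (intro conjI allI)
    show "transpose C = C" by (rule Ct)
  next
    fix x
    have "x \<bullet> (C *v x) = (Q *v x) \<bullet> (M *v (Q *v x))"
      unfolding C_def by (simp add: sym_mv[OF Qt] flip: matrix_vector_mul_assoc)
    also have "\<dots> \<ge> 0" using psd unfolding M_def by (rule psd_form)
    finally show "0 \<le> x \<bullet> (C *v x)" .
  qed
  define N where "N = Q ** M ** M ** Q - lam *\<^sub>R C"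
  have Npos: "0 \<le> x \<bullet> (N *v x)" for x
  proof -
    have a: "x \<bullet> ((Q ** M ** M ** Q) *v x) = (norm (M *v (Q *v x)))^2"
    proof -
      have "x \<bullet> ((Q ** M ** M ** Q) *v x) = (Q *v x) \<bullet> (M *v (M *v (Q *v x)))"
        by (simp add: sym_mv[OF Qt] flip: matrix_vector_mul_assoc)
      also have "\<dots> = (M *v (Q *v x)) \<bullet> (M *v (Q *v x))" by (simp add: sym_mv[OF Mt])
      finally show ?thesis by (simp add: power2_norm_eq_inner)
    qed
    have bb: "x \<bullet> (C *v x) = (Q *v x) \<bullet> (M *v (Q *v x))"
      unfolding C_def by (simp add: sym_mv[OF Qt] flip: matrix_vector_mul_assoc)
    have "x \<bullet> (N *v x) = (norm (M *v (Q *v x)))^2 - lam * ((Q *v x) \<bullet> (M *v (Q *v x)))"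
      unfolding N_def by (simp add: matrix_vector_mult_diff_rdistrib inner_diff_right scaleR_mv a bb)
    then show ?thesis using F[of "Q *v x"] by simp
  qed
  have CN: "0 \<le> inner C N" by (rule psd_inner_nonneg[OF Cpsd Npos])
  have tB: "transpose B = Q ** M ** P" unfolding B_def
    by (simp add: matrix_transpose_mul Pt Qt Mt matrix_mul_assoc)
  have QMMQ: "Q ** M ** M ** Q = transpose B ** B + C ** C"
  proof -
    have "transpose B ** B = (Q ** M ** P) ** B" by (simp only: tB)
    also have "\<dots> = Q ** M ** P ** M ** Q" unfolding B_def by (simp add: matrix_mul_assoc PP2)
    finally have "transpose B ** B = Q ** M ** P ** M ** Q" .
    moreover have "C ** C = Q ** M ** Q ** M ** Q" unfolding C_def
    proof -
      have "Q ** M ** Q ** Q = Q ** M ** (Q ** Q)" by (simp only: matrix_mul_assoc)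
      then have "Q ** M ** Q ** Q = Q ** M ** Q" by (simp add: QQ)
      then show "Q ** M ** Q ** (Q ** M ** Q) = Q ** M ** Q ** M ** Q" by (simp add: matrix_mul_assoc)
    qed
    moreover have "Q ** M ** Q ** M ** Q = Q ** M ** M ** Q - Q ** M ** P ** M ** Q"
      unfolding Q_def[of] by (simp add: mm_diff_l mm_diff_r matrix_mul_assoc)
    ultimately show ?thesis by simp
  qed
  have cc: "inner C C = c^2" unfolding c_def by (simp add: power2_norm_eq_inner)
  have k0: "lam * c^2 \<le> inner C (transpose B ** B) + inner C (C ** C)"
    using CN unfolding N_def QMMQ by (simp add: inner_diff_right inner_add_right cc)
  have k1: "inner C (transpose B ** B) \<le> c * b^2"
  proof -
    have "inner C (transpose B ** B) \<le> c * norm (transpose B ** B)"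
      unfolding c_def by (rule norm_cauchy_schwarz)
    also have "\<dots> \<le> c * (b * b)" unfolding c_def b_def
      using norm_mm[of "transpose B" B] norm_transpose[of B] by (intro mult_left_mono) auto
    finally show ?thesis by (simp add: power2_eq_square)
  qed
  have k2: "inner C (C ** C) \<le> c^3"
  proof -
    have "inner C (C ** C) \<le> c * norm (C ** C)"
      unfolding c_def by (rule norm_cauchy_schwarz)
    also have "\<dots> \<le> c * (c * c)" unfolding c_def
      using norm_mm[of C C] by (intro mult_left_mono) auto
    finally show ?thesis by (simp add: power3_eq_cube)
  qed
  have key: "lam * c^2 \<le> c * b^2 + c^3" using k0 k1 k2 by linarith
  have cl: "D \<le> \<rho> * lam" using close unfolding D_def E_def M_def lam_def frob_norm_eq .
  have c0: "0 \<le> c" unfolding c_def by simp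
  have "c / D \<le> 1 / sqrt 2 * (\<rho> / sqrt (1 - \<rho>^2))"
    by (rule final_arith[OF D0 c0 lam0 cl rho DD key])
  then show ?thesis using goal1 sinv by simp
qed

end
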